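(* Let $\mathcal C$ be an open (i.e. non-closed) convex curve whose radius of curvature satisfies $\rho\ge R_1$ at every point, for some constant $R_1>0$, and let $\mathcal L$ be a lattice in $\mathbb R^2$. Then $$\#(\mathcal C\cap\mathcal L)<4+\frac{\mathrm{Length}(\mathcal C)}{(A_{\mathcal L}R_1)^{1/3}}.$$ If in addition the total curvature satisfies $\int_{\mathcal C}\kappa\,ds\le\pi$, then $$\#(\mathcal C\cap\mathcal L)<2+\frac{\mathrm{Length}(\mathcal C)}{(A_{\mathcal L}R_1)^{1/3}}.$$
   Context: A lattice is a set $\mathcal L=\mathcal L(v_0,v_1,v_2)=\{v_0+mv_1+nv_2: m,n\in\mathbb Z\}$ where $v_0,v_1,v_2\in\mathbb R^2$ and $v_1,v_2$ are linearly independent. Its invariant is $A_{\mathcal L}=|\det(v_1,v_2)|$. All curves are of class $C^2$ with nonvanishing first and second derivative vectors, oriented so that the curvature $\kappa$ is positive; a convex curve is such a curve lying on the boundary of a convex planar region, and an open convex curve is a non-closed arc of such a boundary. The radius of curvature is $\rho=1/\kappa$, $s$ is arclength, and the total curvature is $\int_{\mathcal C}\kappa\,ds$. *)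

theory Defs
  imports "HOL-Analysis.Analysis"
begin

definition det2 :: "real^2 \<Rightarrow> real^2 \<Rightarrow> real" where
  "det2 u v = u$1 * v$2 - u$2 * v$1"

definition lattice :: "real^2 \<Rightarrow> real^2 \<Rightarrow> real^2 \<Rightarrow> (real^2) set" where
  "lattice v0 v1 v2 = {v0 + of_int m *\<^sub>R v1 + of_int n *\<^sub>R v2 | m n :: int. True}"

definition lattice_invariant :: "real^2 \<Rightarrow> real^2 \<Rightarrow> real" where
  "lattice_invariant v1 v2 = \<bar>det2 v1 v2\<bar>"

definition C2_pos_curve ::
  "(real \<Rightarrow> real^2) \<Rightarrow> (real \<Rightarrow> real^2) \<Rightarrow> (real \<Rightarrow> real^2) \<Rightarrow> real \<Rightarrow> real \<Rightarrow> bool" where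
  "C2_pos_curve \<gamma> g1 g2 a b \<longleftrightarrow> a < b \<and>
     (\<forall>t\<in>{a..b}. (\<gamma> has_vector_derivative g1 t) (at t within {a..b}) \<and>
                  (g1 has_vector_derivative g2 t) (at t within {a..b})) \<and>
     continuous_on {a..b} g2 \<and>
     (\<forall>t\<in>{a..b}. g1 t \<noteq> 0 \<and> g2 t \<noteq> 0 \<and> det2 (g1 t) (g2 t) > 0)"

definition curvature :: "(real \<Rightarrow> real^2) \<Rightarrow> (real \<Rightarrow> real^2) \<Rightarrow> real \<Rightarrow> real" where
  "curvature g1 g2 t = det2 (g1 t) (g2 t) / norm (g1 t) ^ 3"

text \<open>An open convex curve: a non-closed (simple) arc of the boundary of a convex
  planar region.\<close>
definition open_convex_curve ::
  "(real \<Rightarrow> real^2) \<Rightarrow> (real \<Rightarrow> real^2) \<Rightarrow> (real \<Rightarrow> real^2) \<Rightarrow> real \<Rightarrow> real \<Rightarrow> bool" where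
  "open_convex_curve \<gamma> g1 g2 a b \<longleftrightarrow> C2_pos_curve \<gamma> g1 g2 a b \<and>
     inj_on \<gamma> {a..b} \<and>
     (\<exists>K::(real^2) set. convex K \<and> interior K \<noteq> {} \<and> \<gamma> ` {a..b} \<subseteq> frontier K)"

definition curve_length :: "(real \<Rightarrow> real^2) \<Rightarrow> real \<Rightarrow> real \<Rightarrow> real" where
  "curve_length g1 a b = integral {a..b} (\<lambda>t. norm (g1 t))"

definition total_curvature ::
  "(real \<Rightarrow> real^2) \<Rightarrow> (real \<Rightarrow> real^2) \<Rightarrow> real \<Rightarrow> real \<Rightarrow> real" where
  "total_curvature g1 g2 a b = integral {a..b} (\<lambda>t. curvature g1 g2 t * norm (g1 t))"

end

theory Submission
  imports Defs
begin

lemma norm2: "norm (x::real^2) = sqrt ((x$1)^2 + (x$2)^2)"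
  by (simp add: norm_eq_sqrt_inner inner_vec_def sum_2 power2_eq_square)
lemma inner2: "(x::real^2) \<bullet> y = x$1*y$1 + x$2*y$2"
  by (simp add: inner_vec_def sum_2)
lemma lagrange2: "((x$1)^2 + (x$2)^2) * ((y$1)^2 + (y$2)^2) = (det2 x y)^2 + (x \<bullet> y)^2"
  unfolding det2_def inner2 by (simp add: power2_eq_square algebra_simps)
lemma det2_bound: "\<bar>det2 x y\<bar> \<le> norm x * norm y"
proof -
  have "(det2 x y)^2 \<le> ((x$1)^2 + (x$2)^2) * ((y$1)^2 + (y$2)^2)"
    unfolding lagrange2 by simp
  hence "sqrt ((det2 x y)^2) \<le> sqrt (((x$1)^2 + (x$2)^2) * ((y$1)^2 + (y$2)^2))" by (rule real_sqrt_le_mono)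
  thus ?thesis by (simp add: norm2 real_sqrt_mult)
qed


lemma det2_add1: "det2 (x + y) z = det2 x z + det2 y z" by (simp add: det2_def algebra_simps)
lemma det2_add2: "det2 z (x + y) = det2 z x + det2 z y" by (simp add: det2_def algebra_simps)
lemma det2_diff1: "det2 (x - y) z = det2 x z - det2 y z" by (simp add: det2_def algebra_simps)
lemma det2_diff2: "det2 z (x - y) = det2 z x - det2 z y" by (simp add: det2_def algebra_simps)
lemma det2_scale1: "det2 (c *\<^sub>R x) z = c * det2 x z" by (simp add: det2_def algebra_simps)
lemma det2_scale2: "det2 z (c *\<^sub>R x) = c * det2 z x" by (simp add: det2_def algebra_simps)
lemma det2_self: "det2 x x = 0" by (simp add: det2_def)
lemma det2_swap: "det2 y x = - det2 x y" by (simp add: det2_def)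
lemmas det2_lin = det2_add1 det2_add2 det2_diff1 det2_diff2 det2_scale1 det2_scale2 det2_self

lemma lattice_det:
  assumes "p \<in> lattice v0 v1 v2" "q \<in> lattice v0 v1 v2" "r \<in> lattice v0 v1 v2"
    and nz: "det2 (q - p) (r - q) \<noteq> 0"
  shows "lattice_invariant v1 v2 \<le> \<bar>det2 (q - p) (r - q)\<bar>"
proof -
  obtain m0 n0 where p: "p = v0 + of_int m0 *\<^sub>R v1 + of_int n0 *\<^sub>R v2" using assms(1) by (auto simp: lattice_def)
  obtain m1 n1 where q: "q = v0 + of_int m1 *\<^sub>R v1 + of_int n1 *\<^sub>R v2" using assms(2) by (auto simp: lattice_def)
  obtain m2 n2 where r: "r = v0 + of_int m2 *\<^sub>R v1 + of_int n2 *\<^sub>R v2" using assms(3) by (auto simp: lattice_def)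
  define k where "k = (m1 - m0) * (n2 - n1) - (n1 - n0) * (m2 - m1)"
  have e: "det2 (q - p) (r - q) = of_int k * det2 v1 v2"
    unfolding p q r k_def det2_def by (simp add: algebra_simps)
  have "k \<noteq> 0" using nz e by auto
  hence "1 \<le> \<bar>real_of_int k\<bar>" by linarith
  hence "1 * \<bar>det2 v1 v2\<bar> \<le> \<bar>real_of_int k\<bar> * \<bar>det2 v1 v2\<bar>" by (intro mult_right_mono) auto
  thus ?thesis by (simp add: e lattice_invariant_def abs_mult)
qed

lemma lattice_finite:
  assumes "bounded S" and d: "det2 v1 v2 \<noteq> 0"
  shows "finite (S \<inter> lattice v0 v1 v2)"
proof -
  obtain B where B: "\<And>x. x \<in> S \<Longrightarrow> norm x \<le> B" using assms(1) bounded_iff by blast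
  define M where "M = ceiling ((B + norm v0) * (norm v1 + norm v2) / \<bar>det2 v1 v2\<bar>)"
  let ?f = "\<lambda>(m::int, n::int). v0 + of_int m *\<^sub>R v1 + of_int n *\<^sub>R v2"
  have "S \<inter> lattice v0 v1 v2 \<subseteq> ?f ` ({-M..M} \<times> {-M..M})"
  proof
    fix x assume x: "x \<in> S \<inter> lattice v0 v1 v2"
    then obtain m n where xe: "x = v0 + of_int m *\<^sub>R v1 + of_int n *\<^sub>R v2" by (auto simp: lattice_def)
    have nx: "norm (x - v0) \<le> B + norm v0" using B[of x] x norm_triangle_ineq4[of x v0] by auto
    have b0: "0 \<le> B + norm v0" using nx norm_ge_zero[of "x - v0"] by linarith
    have dpos: "\<bar>det2 v1 v2\<bar> > 0" using d by auto
    have "det2 (x - v0) v2 = of_int m * det2 v1 v2" unfolding xe by (simp add: det2_lin)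
    hence "\<bar>of_int m\<bar> * \<bar>det2 v1 v2\<bar> \<le> norm (x - v0) * norm v2" using det2_bound[of "x - v0" v2] by (simp add: abs_mult)
    also have "\<dots> \<le> (B + norm v0) * (norm v1 + norm v2)" using nx b0 by (intro mult_mono) auto
    finally have "\<bar>of_int m\<bar> \<le> (B + norm v0) * (norm v1 + norm v2) / \<bar>det2 v1 v2\<bar>"
      using dpos by (simp add: field_simps)
    hence m: "\<bar>m\<bar> \<le> M" unfolding M_def by linarith
    have "det2 v1 (x - v0) = of_int n * det2 v1 v2" unfolding xe by (simp add: det2_lin)
    hence "\<bar>of_int n\<bar> * \<bar>det2 v1 v2\<bar> \<le> norm v1 * norm (x - v0)" using det2_bound[of v1 "x - v0"] by (simp add: abs_mult)
    also have "\<dots> \<le> (norm v1 + norm v2) * (B + norm v0)" using nx b0 by (intro mult_mono) auto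
    finally have "\<bar>of_int n\<bar> \<le> (B + norm v0) * (norm v1 + norm v2) / \<bar>det2 v1 v2\<bar>"
      using dpos by (simp add: field_simps)
    hence n: "\<bar>n\<bar> \<le> M" unfolding M_def by linarith
    show "x \<in> ?f ` ({-M..M} \<times> {-M..M})" using m n xe by (auto intro!: image_eqI[where x="(m,n)"])
  qed
  thus ?thesis by (rule finite_subset) auto
qed


lemma norm_deriv:
  assumes "(g has_vector_derivative g') (at t within X)" "g t \<noteq> (0::real^2)"
  shows "((\<lambda>t. norm (g t)) has_real_derivative (g t \<bullet> g') / norm (g t)) (at t within X)"
proof -
  have "((\<lambda>t. norm (g t)) has_derivative (\<lambda>h. (h *\<^sub>R g') \<bullet> sgn (g t))) (at t within X)"
    using has_derivative_norm[OF assms(2)] assms(1) unfolding has_vector_derivative_def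
    by (intro has_derivative_compose[of g _ t X norm]) auto
  moreover have "(\<lambda>h. (h *\<^sub>R g') \<bullet> sgn (g t)) = (\<lambda>h. h * ((g t \<bullet> g') / norm (g t)))"
    by (rule ext) (simp add: sgn_div_norm inner_commute divide_inverse mult.commute mult.left_commute)
  moreover have "(\<lambda>h. h * ((g t \<bullet> g') / norm (g t))) = (*) ((g t \<bullet> g') / norm (g t))"
    by (rule ext) simp
  ultimately show ?thesis unfolding has_field_derivative_def by metis
qed

lemma unit_deriv:
  assumes "(g has_vector_derivative g') (at t within X)" "g t \<noteq> (0::real^2)"
  shows "((\<lambda>t. (1 / norm (g t)) *\<^sub>R g t) has_vector_derivative
     ((1 / norm (g t)) *\<^sub>R g' - ((g t \<bullet> g') / norm (g t) ^ 3) *\<^sub>R g t)) (at t within X)"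
proof -
  have n: "norm (g t) \<noteq> 0" using assms(2) by auto
  have d1: "((\<lambda>t. 1 / norm (g t)) has_real_derivative - ((g t \<bullet> g') / norm (g t)) / (norm (g t))^2) (at t within X)"
    using DERIV_inverse_fun[OF norm_deriv[OF assms] n] by (simp add: divide_inverse power2_eq_square)
  have "((\<lambda>t. (1 / norm (g t)) *\<^sub>R g t) has_vector_derivative
     (1 / norm (g t)) *\<^sub>R g' + (- ((g t \<bullet> g') / norm (g t)) / (norm (g t))^2) *\<^sub>R g t) (at t within X)"
    using has_vector_derivative_scaleR[OF d1 assms(1)] by simp
  moreover have "(1 / norm (g t)) *\<^sub>R g' + (- ((g t \<bullet> g') / norm (g t)) / (norm (g t))^2) *\<^sub>R g t
     = (1 / norm (g t)) *\<^sub>R g' - ((g t \<bullet> g') / norm (g t) ^ 3) *\<^sub>R g t"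
    using n by (simp add: field_simps power3_eq_cube power2_eq_square)
  ultimately show ?thesis by metis
qed

lemma unit_deriv_norm:
  assumes "g \<noteq> (0::real^2)"
  shows "norm ((1 / norm g) *\<^sub>R g' - ((g \<bullet> g') / norm g ^ 3) *\<^sub>R g) = \<bar>det2 g g'\<bar> / norm g ^ 2"
proof -
  let ?v = "(1 / norm g) *\<^sub>R g' - ((g \<bullet> g') / norm g ^ 3) *\<^sub>R g"
  have n: "norm g > 0" using assms by auto
  have gg: "g \<bullet> g = (norm g)^2" by (simp add: power2_norm_eq_inner)
  have g'g': "g' \<bullet> g' = (norm g')^2" by (simp add: power2_norm_eq_inner)
  have lag: "(norm g)^2 * (norm g')^2 = (det2 g g')^2 + (g \<bullet> g')^2"
    using lagrange2[of g g'] by (simp add: norm2)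
  have "?v \<bullet> ?v = (norm g')^2 / (norm g)^2 - (g \<bullet> g')^2 / (norm g)^4"
    using n by (simp add: inner_diff_left inner_diff_right gg g'g' inner_commute field_simps power2_eq_square power3_eq_cube) (simp add: algebra_simps power4_eq_xxxx)
  also have "\<dots> = (det2 g g')^2 / (norm g)^4"
    using n lag by (simp add: field_simps power2_eq_square power4_eq_xxxx)
  also have "\<dots> = (\<bar>det2 g g'\<bar> / norm g ^ 2)^2"
    by (simp add: power_divide power2_abs power4_eq_xxxx power2_eq_square)
  finally have "(norm ?v)^2 = (\<bar>det2 g g'\<bar> / norm g ^ 2)^2"
    by (simp only: power2_norm_eq_inner)
  thus ?thesis by (rule power2_eq_imp_eq) auto
qed



lemma bl_det2_right: "bounded_linear (\<lambda>w. det2 z w)"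
  unfolding linear_conv_bounded_linear[symmetric]
  by (rule linearI) (simp_all add: det2_lin)
lemma bl_det2_left: "bounded_linear (\<lambda>w. det2 w z)"
  unfolding linear_conv_bounded_linear[symmetric]
  by (rule linearI) (simp_all add: det2_lin)

lemma hi_norm_bound:
  fixes f :: "real \<Rightarrow> 'a::banach"
  assumes "(f has_integral I) X" "(g has_integral J) X" "\<And>x. x \<in> X \<Longrightarrow> norm (f x) \<le> g x"
  shows "norm I \<le> J"
  using integral_norm_bound_integral[of f X g] assms
  by (metis has_integral_integrable integral_unique)

locale ccurve =
  fixes \<gamma> g1 g2 :: "real \<Rightarrow> real^2" and a b R1 :: real
  assumes C: "C2_pos_curve \<gamma> g1 g2 a b"
    and R1: "R1 > 0"
    and rho: "\<forall>t\<in>{a..b}. 1 / curvature g1 g2 t \<ge> R1"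
begin

definition S where "S t = integral {a..t} (\<lambda>t. norm (g1 t))"

lemma ab: "a < b" using C by (simp add: C2_pos_curve_def)
lemma dgam: "t \<in> {a..b} \<Longrightarrow> (\<gamma> has_vector_derivative g1 t) (at t within {a..b})"
  using C by (simp add: C2_pos_curve_def)
lemma dg1: "t \<in> {a..b} \<Longrightarrow> (g1 has_vector_derivative g2 t) (at t within {a..b})"
  using C by (simp add: C2_pos_curve_def)
lemma g1nz: "t \<in> {a..b} \<Longrightarrow> g1 t \<noteq> 0"
  using C by (simp add: C2_pos_curve_def)
lemma detpos: "t \<in> {a..b} \<Longrightarrow> det2 (g1 t) (g2 t) > 0"
  using C by (simp add: C2_pos_curve_def)
lemma cont_g1: "continuous_on {a..b} g1"
  using dg1 has_vector_derivative_continuous continuous_on_eq_continuous_within by blast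
lemma cont_gam: "continuous_on {a..b} \<gamma>"
  using dgam has_vector_derivative_continuous continuous_on_eq_continuous_within by blast
lemma cont_ng1: "continuous_on {a..b} (\<lambda>t. norm (g1 t))"
  using cont_g1 by (intro continuous_intros)

lemma kappa: "t \<in> {a..b} \<Longrightarrow> det2 (g1 t) (g2 t) \<le> norm (g1 t) ^ 3 / R1"
proof -
  assume t: "t \<in> {a..b}"
  have n: "norm (g1 t) > 0" using g1nz[OF t] by auto
  have k: "curvature g1 g2 t > 0" using detpos[OF t] n by (simp add: curvature_def)
  have "R1 \<le> 1 / curvature g1 g2 t" using rho t by auto
  hence "R1 * curvature g1 g2 t \<le> 1" using k by (simp add: field_simps)
  hence "det2 (g1 t) (g2 t) * R1 \<le> norm (g1 t) ^ 3" using n by (simp add: curvature_def field_simps)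
  thus ?thesis using R1 by (simp add: field_simps)
qed

lemma dS: "t \<in> {a..b} \<Longrightarrow> (S has_real_derivative norm (g1 t)) (at t within {a..b})"
  unfolding S_def[abs_def] by (rule integral_has_real_derivative[OF cont_ng1])

lemma ftc:
  fixes F :: "real \<Rightarrow> 'a::banach"
  assumes "a \<le> s" "s \<le> u" "u \<le> b"
    and "\<And>t. t \<in> {a..b} \<Longrightarrow> (F has_vector_derivative f t) (at t within {a..b})"
  shows "(f has_integral (F u - F s)) {s..u}"
  using assms by (intro fundamental_theorem_of_calculus)
    (auto intro: has_vector_derivative_within_subset[of F _ _ "{a..b}"])

lemma ftc_real:
  assumes "a \<le> s" "s \<le> u" "u \<le> b"
    and "\<And>t. t \<in> {a..b} \<Longrightarrow> (F has_real_derivative f t) (at t within {a..b})"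
  shows "(f has_integral (F u - F s)) {s..u}"
  using assms by (intro ftc) (auto simp: has_real_derivative_iff_has_vector_derivative)

definition T where "T t = (1 / norm (g1 t)) *\<^sub>R g1 t"

lemma T_bound:
  assumes "a \<le> s" "s \<le> u" "u \<le> b"
  shows "norm (T u - T s) \<le> (S u - S s) / R1"
proof -
  define T' where "T' t = (1 / norm (g1 t)) *\<^sub>R g2 t - ((g1 t \<bullet> g2 t) / norm (g1 t) ^ 3) *\<^sub>R g1 t" for t
  have dT: "(T has_vector_derivative T' t) (at t within {a..b})" if "t \<in> {a..b}" for t
    unfolding T_def[abs_def] T'_def using unit_deriv[OF dg1[OF that] g1nz[OF that]] by simp
  have i1: "(T' has_integral (T u - T s)) {s..u}" using assms dT by (intro ftc) auto
  have i2: "((\<lambda>t. norm (g1 t) / R1) has_integral ((S u - S s) / R1)) {s..u}"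
    using ftc_real[OF assms, of "\<lambda>t. S t / R1" "\<lambda>t. norm (g1 t) / R1"] DERIV_cdivide[OF dS]
    by (auto simp: diff_divide_distrib)
  have "norm (T' t) \<le> norm (g1 t) / R1" if "t \<in> {s..u}" for t
  proof -
    have t: "t \<in> {a..b}" using that assms by auto
    have n: "norm (g1 t) > 0" using g1nz[OF t] by auto
    have "norm (T' t) = \<bar>det2 (g1 t) (g2 t)\<bar> / norm (g1 t) ^ 2"
      unfolding T'_def by (rule unit_deriv_norm[OF g1nz[OF t]])
    also have "\<dots> \<le> (norm (g1 t) ^ 3 / R1) / norm (g1 t) ^ 2"
      using kappa[OF t] detpos[OF t] n by (intro divide_right_mono) auto
    also have "\<dots> = norm (g1 t) / R1" using n by (simp add: field_simps power3_eq_cube power2_eq_square)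
    finally show ?thesis .
  qed
  thus ?thesis using hi_norm_bound[OF i1 i2] by auto
qed

lemma T_norm: "t \<in> {a..b} \<Longrightarrow> norm (T t) = 1"
  using g1nz by (simp add: T_def)

lemma S_mono: "a \<le> s \<Longrightarrow> s \<le> u \<Longrightarrow> u \<le> b \<Longrightarrow> S s \<le> S u"
  using ftc_real[of s u S "\<lambda>t. norm (g1 t)"] dS
  by (metis has_integral_nonneg atLeastAtMost_iff diff_ge_0_iff_ge norm_ge_zero)

lemma det_g1_bound:
  assumes "s \<in> {a..b}" "u \<in> {a..b}"
  shows "\<bar>det2 (g1 s) (g1 u)\<bar> \<le> norm (g1 s) * norm (g1 u) * \<bar>S u - S s\<bar> / R1"
proof -
  have key: "\<bar>det2 (T s) (T u)\<bar> \<le> \<bar>S u - S s\<bar> / R1"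
  proof (cases "s \<le> u")
    case True
    have "\<bar>det2 (T s) (T u)\<bar> = \<bar>det2 (T s) (T u - T s)\<bar>" by (simp add: det2_lin)
    also have "\<dots> \<le> norm (T s) * norm (T u - T s)" by (rule det2_bound)
    also have "\<dots> \<le> (S u - S s) / R1" using T_bound[of s u] True assms T_norm by auto
    also have "\<dots> \<le> \<bar>S u - S s\<bar> / R1" using R1 by (intro divide_right_mono) auto
    finally show ?thesis .
  next
    case False
    have "\<bar>det2 (T s) (T u)\<bar> = \<bar>det2 (T u) (T s - T u)\<bar>" by (simp add: det2_lin det2_swap[of "T s"])
    also have "\<dots> \<le> norm (T u) * norm (T s - T u)" by (rule det2_bound)
    also have "\<dots> \<le> (S s - S u) / R1" using T_bound[of u s] False assms T_norm by auto
    also have "\<dots> \<le> \<bar>S u - S s\<bar> / R1" using R1 by (intro divide_right_mono) auto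
    finally show ?thesis .
  qed
  have ns: "norm (g1 s) > 0" "norm (g1 u) > 0" using g1nz assms by auto
  have "g1 s = norm (g1 s) *\<^sub>R T s" "g1 u = norm (g1 u) *\<^sub>R T u" using ns by (auto simp: T_def)
  hence "det2 (g1 s) (g1 u) = norm (g1 s) * norm (g1 u) * det2 (T s) (T u)"
    by (metis det2_scale1 det2_scale2 mult.assoc)
  hence "\<bar>det2 (g1 s) (g1 u)\<bar> = norm (g1 s) * norm (g1 u) * \<bar>det2 (T s) (T u)\<bar>"
    by (simp add: abs_mult)
  also have "\<dots> \<le> norm (g1 s) * norm (g1 u) * (\<bar>S u - S s\<bar> / R1)"
    using key ns by (intro mult_left_mono) auto
  finally show ?thesis by simp
qed

end


context ccurve begin

lemma area_bound:
  assumes "a \<le> t0" "t0 \<le> m" "m \<le> t2" "t2 \<le> b"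
  shows "\<bar>det2 (\<gamma> m - \<gamma> t0) (\<gamma> t2 - \<gamma> m)\<bar> \<le> (S m - S t0) * (S t2 - S m) * (S t2 - S t0) / (2 * R1)"
proof -
  define \<alpha> where "\<alpha> = S m - S t0"
  define \<beta> where "\<beta> = S t2 - S m"
  have inner: "\<bar>det2 (g1 x) (\<gamma> t2 - \<gamma> m)\<bar> \<le> norm (g1 x) / R1 * (\<beta>^2 / 2 + (S m - S x) * \<beta>)"
    if x: "x \<in> {t0..m}" for x
  proof -
    have xab: "x \<in> {a..b}" using x assms by auto
    have i1: "((\<lambda>y. det2 (g1 x) (g1 y)) has_integral (det2 (g1 x) (\<gamma> t2) - det2 (g1 x) (\<gamma> m))) {m..t2}"
      using assms x by (intro ftc[of m t2 "\<lambda>y. det2 (g1 x) (\<gamma> y)"])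
        (auto intro: bounded_linear.has_vector_derivative[OF bl_det2_right dgam])
    have i2: "((\<lambda>y. norm (g1 x) / R1 * (norm (g1 y) * (S y - S m) + norm (g1 y) * (S m - S x))) has_integral
       (norm (g1 x) / R1 * ((S t2 - S m)^2/2 + (S m - S x) * S t2) - norm (g1 x) / R1 * ((S m - S m)^2/2 + (S m - S x) * S m))) {m..t2}"
      using assms x R1
      by (intro ftc_real[of m t2 "\<lambda>y. norm (g1 x) / R1 * ((S y - S m)^2/2 + (S m - S x) * S y)"])
         (auto intro!: derivative_eq_intros dS simp: field_simps)
    have le: "norm (det2 (g1 x) (g1 y)) \<le> norm (g1 x) / R1 * (norm (g1 y) * (S y - S m) + norm (g1 y) * (S m - S x))"
      if y: "y \<in> {m..t2}" for y
    proof -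
      have yab: "y \<in> {a..b}" using y assms by auto
      have "S x \<le> S y" using S_mono[of x y] x y assms by auto
      hence "\<bar>S y - S x\<bar> = (S y - S m) + (S m - S x)" by simp
      hence e2: "norm (g1 x) * norm (g1 y) * \<bar>S y - S x\<bar> / R1 = norm (g1 x) / R1 * (norm (g1 y) * (S y - S m) + norm (g1 y) * (S m - S x))"
        using R1 by (simp add: field_simps)
      show ?thesis unfolding real_norm_def e2[symmetric] by (rule det_g1_bound[OF xab yab])
    qed
    have "norm (det2 (g1 x) (\<gamma> t2) - det2 (g1 x) (\<gamma> m)) \<le>
      norm (g1 x) / R1 * ((S t2 - S m)^2/2 + (S m - S x) * S t2) - norm (g1 x) / R1 * ((S m - S m)^2/2 + (S m - S x) * S m)"
      by (rule hi_norm_bound[OF i1 i2 le])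
    thus ?thesis by (simp add: det2_lin \<beta>_def algebra_simps power2_eq_square)
  qed
  have o1: "((\<lambda>x. det2 (g1 x) (\<gamma> t2 - \<gamma> m)) has_integral (det2 (\<gamma> m) (\<gamma> t2 - \<gamma> m) - det2 (\<gamma> t0) (\<gamma> t2 - \<gamma> m))) {t0..m}"
    using assms by (intro ftc[of t0 m "\<lambda>y. det2 (\<gamma> y) (\<gamma> t2 - \<gamma> m)"])
        (auto intro: bounded_linear.has_vector_derivative[OF bl_det2_left dgam])
  have o2: "((\<lambda>x. norm (g1 x) / R1 * (\<beta>^2 / 2 + (S m - S x) * \<beta>)) has_integral
     ((\<beta>^2/2 * S m - \<beta> * (S m - S m)^2/2) / R1 - (\<beta>^2/2 * S t0 - \<beta> * (S m - S t0)^2/2) / R1)) {t0..m}"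
    using assms R1
    by (intro ftc_real[of t0 m "\<lambda>x. (\<beta>^2/2 * S x - \<beta> * (S m - S x)^2/2) / R1"])
       (auto intro!: derivative_eq_intros dS simp: field_simps)
  have "norm (det2 (\<gamma> m) (\<gamma> t2 - \<gamma> m) - det2 (\<gamma> t0) (\<gamma> t2 - \<gamma> m)) \<le>
     (\<beta>^2/2 * S m - \<beta> * (S m - S m)^2/2) / R1 - (\<beta>^2/2 * S t0 - \<beta> * (S m - S t0)^2/2) / R1"
    using hi_norm_bound[OF o1 o2] inner by auto
  also have "\<dots> = \<alpha> * \<beta> * (\<alpha> + \<beta>) / (2 * R1)"
    unfolding \<alpha>_def using R1 by (simp add: field_simps power2_eq_square)
  finally show ?thesis by (simp add: det2_lin \<alpha>_def \<beta>_def)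
qed

end



lemma perp2: assumes "n \<noteq> (0::real^2)" "n \<bullet> v = 0" "n \<bullet> w = 0" shows "det2 v w = 0"
proof -
  have e1: "n$1 * v$1 = - (n$2 * v$2)" "n$1 * w$1 = - (n$2 * w$2)" using assms by (simp_all add: inner2 eq_neg_iff_add_eq_0)
  have "n$1 * det2 v w = (n$1 * v$1) * w$2 - v$2 * (n$1 * w$1)" by (simp add: det2_def algebra_simps)
  also have "\<dots> = (- (n$2 * v$2)) * w$2 - v$2 * (- (n$2 * w$2))" by (simp only: e1)
  also have "\<dots> = 0" by (simp add: algebra_simps)
  finally have a: "n$1 * det2 v w = 0" .
  have e2: "n$2 * v$2 = - (n$1 * v$1)" "n$2 * w$2 = - (n$1 * w$1)" using e1 by simp_all
  have "n$2 * det2 v w = v$1 * (n$2 * w$2) - (n$2 * v$2) * w$1" by (simp add: det2_def algebra_simps)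
  also have "\<dots> = v$1 * (- (n$1 * w$1)) - (- (n$1 * v$1)) * w$1" by (simp only: e2)
  also have "\<dots> = 0" by (simp add: algebra_simps)
  finally have b: "n$2 * det2 v w = 0" .
  have "n$1 \<noteq> 0 \<or> n$2 \<noteq> 0" using assms(1) by (auto simp: vec_eq_iff forall_2)
  thus ?thesis using a b by auto
qed

lemma par_det: assumes "d \<noteq> (0::real^2)" "det2 d v = 0" shows "v = ((v \<bullet> d) / (d \<bullet> d)) *\<^sub>R d"
proof -
  have dd: "d \<bullet> d \<noteq> 0" using assms by auto
  have e: "d$1 * v$2 = d$2 * v$1" using assms(2) by (simp add: det2_def)
  have "v$i * (d \<bullet> d) = (v \<bullet> d) * d$i" if "i = 1 \<or> i = 2" for i
    using that e by (auto simp: inner2 algebra_simps)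
  hence "v$i = ((v \<bullet> d) / (d \<bullet> d)) * d$i" if "i = 1 \<or> i = 2" for i
    using that dd by (simp add: field_simps)
  thus ?thesis by (auto simp: vec_eq_iff forall_2)
qed

lemma collinear_between:
  fixes p q r :: "real^2"
  assumes "p \<noteq> q" "q \<noteq> r" "p \<noteq> r" "det2 (q - p) (r - q) = 0"
  shows "q \<in> open_segment p r \<or> p \<in> open_segment q r \<or> r \<in> open_segment p q"
proof -
  have d: "q - p \<noteq> 0" using assms by auto
  have "det2 (q - p) (r - p) = det2 (q - p) (r - q)" unfolding det2_def by (simp add: algebra_simps)
  hence "det2 (q - p) (r - p) = 0" using assms(4) by simp
  then obtain l where l: "r - p = l *\<^sub>R (q - p)" using par_det[OF d] by blast
  have l0: "l \<noteq> 0" using l assms by auto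
  have l1: "l \<noteq> 1" using l assms by auto
  have r: "r = (1 - l) *\<^sub>R p + l *\<^sub>R q" using l by (simp add: algebra_simps)
  consider "l < 0" | "0 < l \<and> l < 1" | "l > 1" using l0 l1 by linarith
  thus ?thesis
  proof cases
    case 1
    define u where "u = - l / (1 - l)"
    have a1: "(1-l)*(1-u) = 1" "(1-l)*u = -l" using 1 by (simp_all add: u_def field_simps)
    have "(1-l) *\<^sub>R ((1-u) *\<^sub>R r + u *\<^sub>R q) = ((1-l)*(1-u)) *\<^sub>R r + ((1-l)*u) *\<^sub>R q"
      by (simp add: scaleR_add_right)
    also have "\<dots> = r - l *\<^sub>R q" using a1 by simp
    also have "\<dots> = (1-l) *\<^sub>R p" using r by (simp add: algebra_simps)
    finally have "(1-l) *\<^sub>R ((1-u) *\<^sub>R r + u *\<^sub>R q) = (1-l) *\<^sub>R p" .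
    hence pe: "p = (1 - u) *\<^sub>R r + u *\<^sub>R q" using 1 by (subst (asm) scaleR_cancel_left) auto
    have l1': "1 - l > 0" using 1 by simp
    have u0: "0 < u" unfolding u_def using 1 l1' by (intro divide_pos_pos) auto
    have u1: "u < 1" unfolding u_def using 1 l1' by (subst divide_less_eq_1_pos) auto
    have "p \<in> open_segment r q" unfolding in_segment using assms(2) pe u0 u1 by (intro conjI exI[of _ u]) auto
    thus ?thesis by (metis open_segment_commute)
  next
    case 2
    have "r \<in> open_segment p q" unfolding in_segment using assms(1) r 2 by (intro conjI exI[of _ l]) auto
    thus ?thesis by blast
  next
    case 3
    define u where "u = 1 / l"
    have a1: "l*(1-u) = l - 1" "l*u = 1" using 3 by (simp_all add: u_def field_simps)
    have "l *\<^sub>R ((1-u) *\<^sub>R p + u *\<^sub>R r) = (l*(1-u)) *\<^sub>R p + (l*u) *\<^sub>R r"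
      by (simp add: scaleR_add_right)
    also have "\<dots> = (l - 1) *\<^sub>R p + r" using a1 by simp
    also have "\<dots> = l *\<^sub>R q" using r by (simp add: algebra_simps)
    finally have "l *\<^sub>R ((1-u) *\<^sub>R p + u *\<^sub>R r) = l *\<^sub>R q" .
    hence qe: "q = (1 - u) *\<^sub>R p + u *\<^sub>R r" using 3 by (subst (asm) scaleR_cancel_left) auto
    have u0: "0 < u" unfolding u_def using 3 by simp
    have u1: "u < 1" unfolding u_def using 3 by simp
    have "q \<in> open_segment p r" unfolding in_segment using assms(3) qe u0 u1 by (intro conjI exI[of _ u]) auto
    thus ?thesis by blast
  qed
qed

lemma geom_interior:
  fixes K :: "(real^2) set"
  assumes K: "convex K" and z: "z \<in> interior K" and p: "p \<in> closure K" and r: "r \<in> closure K"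
    and q: "q \<in> open_segment p r" and n: "n \<noteq> 0"
    and np: "n \<bullet> p = n \<bullet> q" and nr: "n \<bullet> r = n \<bullet> q" and nz: "n \<bullet> z > n \<bullet> q"
  shows "\<exists>\<rho>>0. \<forall>x. dist x q < \<rho> \<and> n \<bullet> x > n \<bullet> q \<longrightarrow> x \<in> interior K"
proof -
  obtain u where u: "0 < u" "u < 1" "q = (1 - u) *\<^sub>R p + u *\<^sub>R r" and pr: "p \<noteq> r" using q by (auto simp: in_segment)
  define h where "h = n \<bullet> z - n \<bullet> q"
  have h: "h > 0" using nz by (simp add: h_def)
  define \<theta> where "\<theta> x = (n \<bullet> x - n \<bullet> q) / h" for x
  define W where "W x = (1 / (1 - \<theta> x)) *\<^sub>R (x - \<theta> x *\<^sub>R z)" for x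
  define e0 where "e0 = min u (1 - u) * norm (r - p)"
  have e0: "e0 > 0" using u pr by (simp add: e0_def)
  have ct: "continuous (at q) \<theta>" unfolding \<theta>_def[abs_def] using h by (intro continuous_intros) auto
  have tq: "\<theta> q = 0" by (simp add: \<theta>_def)
  have cW: "continuous (at q) W" unfolding W_def[abs_def]
    using ct tq h by (intro continuous_intros) auto
  have Wq: "W q = q" by (simp add: W_def tq)
  obtain \<rho>1 where \<rho>1: "\<rho>1 > 0" "\<And>x. dist x q < \<rho>1 \<Longrightarrow> dist (\<theta> x) (\<theta> q) < 1"
    using ct unfolding continuous_at_eps_delta by (meson zero_less_one)
  obtain \<rho>2 where \<rho>2: "\<rho>2 > 0" "\<And>x. dist x q < \<rho>2 \<Longrightarrow> dist (W x) (W q) < e0"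
    using cW e0 unfolding continuous_at_eps_delta by meson
  have rp: "r - p \<noteq> 0" using pr by auto
  have nrp: "n \<bullet> (r - p) = 0" using np nr by (simp add: inner_diff_right)
  show ?thesis
  proof (intro exI[of _ "min \<rho>1 \<rho>2"] conjI allI impI)
    show "min \<rho>1 \<rho>2 > 0" using \<rho>1 \<rho>2 by auto
    fix x assume x: "dist x q < min \<rho>1 \<rho>2 \<and> n \<bullet> x > n \<bullet> q"
    have th: "0 < \<theta> x" "\<theta> x < 1" using \<rho>1(2)[of x] x h by (auto simp: tq \<theta>_def dist_real_def)
    define w where "w = W x"
    have wq: "norm (w - q) < e0" using \<rho>2(2)[of x] x Wq by (auto simp: w_def dist_norm)
    have "(1 - \<theta> x) *\<^sub>R w = x - \<theta> x *\<^sub>R z" using th by (simp add: w_def W_def)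
    hence xw: "x = (1 - \<theta> x) *\<^sub>R w + \<theta> x *\<^sub>R z" by (simp add: algebra_simps)
    have nw: "n \<bullet> w = n \<bullet> q"
    proof -
      have "(1 - \<theta> x) * (n \<bullet> w) = n \<bullet> x - \<theta> x * (n \<bullet> z)"
        using th by (simp add: w_def W_def inner_diff_right)
      also have "\<dots> = (1 - \<theta> x) * (n \<bullet> q)" using h by (simp add: \<theta>_def h_def field_simps)
      finally show ?thesis using th by simp
    qed
    have "n \<bullet> (w - q) = 0" using nw by (simp add: inner_diff_right)
    hence "det2 (r - p) (w - q) = 0" using perp2[OF n nrp] by simp
    then obtain \<tau> where tau: "w - q = \<tau> *\<^sub>R (r - p)" using par_det[OF rp] by blast
    have "\<bar>\<tau>\<bar> * norm (r - p) < min u (1 - u) * norm (r - p)"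
      using wq tau by (simp add: e0_def)
    hence ta: "\<bar>\<tau>\<bar> < min u (1 - u)" using rp by simp
    have "w = (1 - (u + \<tau>)) *\<^sub>R p + (u + \<tau>) *\<^sub>R r"
      using tau u(3) by (simp add: algebra_simps)
    moreover have "0 \<le> u + \<tau>" "u + \<tau> \<le> 1" using ta by auto
    ultimately have "w \<in> closed_segment p r" by (auto simp: in_segment)
    hence wK: "w \<in> closure K" using p r convex_closure[OF K] by (meson closed_segment_subset subsetD)
    have "w \<noteq> z" using nw nz by auto
    have "x = (1 - (1 - \<theta> x)) *\<^sub>R z + (1 - \<theta> x) *\<^sub>R w" using xw by (simp add: algebra_simps)
    hence "x \<in> open_segment z w" unfolding in_segment using \<open>w \<noteq> z\<close> th by (intro conjI exI[of _ "1 - \<theta> x"]) auto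
    thus "x \<in> interior K" using in_interior_closure_convex_segment[OF K z wK] by auto
  qed
qed




locale ccurve_conv = ccurve +
  fixes K :: "(real^2) set"
  assumes Kc: "convex K" and Ki: "interior K \<noteq> {}" and Kf: "\<gamma> ` {a..b} \<subseteq> frontier K"
    and inj: "inj_on \<gamma> {a..b}"
begin

lemma flat:
  assumes s: "s \<in> {a..b}" and d: "\<delta> > 0" and n: "n \<noteq> 0"
    and c: "\<And>t. t \<in> {a..b} \<Longrightarrow> \<bar>t - s\<bar> < \<delta> \<Longrightarrow> n \<bullet> \<gamma> t = c"
  shows False
proof -
  have ab': "cbox a b = {a..b}" by simp
  have D1: "n \<bullet> g1 t = 0" if t: "t \<in> {a..b}" "\<bar>t - s\<bar> < \<delta> / 2" for t
  proof -
    have f: "((\<lambda>t. n \<bullet> \<gamma> t) has_vector_derivative n \<bullet> g1 t) (at t within {a..b})"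
      by (rule bounded_linear.has_vector_derivative[OF bounded_linear_inner_right dgam[OF t(1)]])
    have c0: "((\<lambda>_. c) has_vector_derivative 0) (at t within {a..b})" by (rule has_vector_derivative_const)
    have eqs: "(\<lambda>_. c) x' = n \<bullet> \<gamma> x'" if "x' \<in> {a..b}" "dist x' t < \<delta>/2" for x'
    proof -
      have "\<bar>x' - s\<bar> < \<delta>" using that(2) t(2) unfolding dist_real_def by arith
      thus ?thesis using c[OF that(1)] by simp
    qed
    have g: "((\<lambda>t. n \<bullet> \<gamma> t) has_vector_derivative 0) (at t within {a..b})"
      by (rule has_vector_derivative_transform_within[where d="\<delta>/2", OF c0 _ t(1) eqs]) (use d in simp)
    show ?thesis using vector_derivative_unique_within_closed_interval[of a b t "\<lambda>t. n \<bullet> \<gamma> t"] f g t ab by simp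
  qed
  have f: "((\<lambda>t. n \<bullet> g1 t) has_vector_derivative n \<bullet> g2 s) (at s within {a..b})"
    by (rule bounded_linear.has_vector_derivative[OF bounded_linear_inner_right dg1[OF s]])
  have c0: "((\<lambda>_. 0) has_vector_derivative 0) (at s within {a..b})" by (rule has_vector_derivative_const)
  have eqs: "(\<lambda>_. 0) x' = n \<bullet> g1 x'" if "x' \<in> {a..b}" "dist x' s < \<delta>/2" for x'
    using D1[OF that(1)] that(2) by (simp add: dist_real_def)
  have g: "((\<lambda>t. n \<bullet> g1 t) has_vector_derivative 0) (at s within {a..b})"
    by (rule has_vector_derivative_transform_within[where d="\<delta>/2", OF c0 _ s eqs]) (use d in simp)
  have "n \<bullet> g2 s = 0" using vector_derivative_unique_within_closed_interval[of a b s "\<lambda>t. n \<bullet> g1 t"] f g s ab by simp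
  moreover have "n \<bullet> g1 s = 0" using D1[OF s] d by simp
  ultimately have "det2 (g1 s) (g2 s) = 0" using perp2[OF n] by simp
  thus False using detpos[OF s] by simp
qed

lemma mid:
  assumes s: "s1 \<in> {a..b}" "s2 \<in> {a..b}" "s3 \<in> {a..b}"
    and q: "\<gamma> s2 \<in> open_segment (\<gamma> s1) (\<gamma> s3)"
  shows False
proof -
  define p where "p = \<gamma> s1"
  define qq where "qq = \<gamma> s2"
  define r where "r = \<gamma> s3"
  have fr: "\<gamma> t \<in> closure K" "\<gamma> t \<notin> interior K" if "t \<in> {a..b}" for t
    using Kf that unfolding frontier_def by blast+
  have ri: "rel_interior K = interior K" using rel_interior_nonempty_interior[OF Ki] .
  obtain n where n: "n \<noteq> 0" and nc: "\<And>y. y \<in> closure K \<Longrightarrow> n \<bullet> qq \<le> n \<bullet> y"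
    and ni: "\<And>y. y \<in> interior K \<Longrightarrow> n \<bullet> qq < n \<bullet> y"
    using supporting_hyperplane_relative_frontier[OF Kc fr(1)[OF s(2)]] fr(2)[OF s(2)] ri
    unfolding qq_def by metis
  have pK: "p \<in> closure K" "r \<in> closure K" using fr s by (auto simp: p_def r_def)
  obtain u where u: "0 < u" "u < 1" "qq = (1 - u) *\<^sub>R p + u *\<^sub>R r"
    using q by (auto simp: in_segment p_def qq_def r_def)
  have e: "n \<bullet> qq = (1 - u) * (n \<bullet> p) + u * (n \<bullet> r)" using u(3) by (simp add: inner_add_right)
  have h1: "(1 - u) * (n \<bullet> p - n \<bullet> qq) \<ge> 0" "u * (n \<bullet> r - n \<bullet> qq) \<ge> 0"
    using nc[OF pK(1)] nc[OF pK(2)] u by auto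
  have "(1 - u) * (n \<bullet> p - n \<bullet> qq) + u * (n \<bullet> r - n \<bullet> qq) = 0" using e by (simp add: algebra_simps)
  hence "(1 - u) * (n \<bullet> p - n \<bullet> qq) = 0" "u * (n \<bullet> r - n \<bullet> qq) = 0" using h1 by linarith+
  hence np: "n \<bullet> p = n \<bullet> qq" and nr: "n \<bullet> r = n \<bullet> qq" using u by auto
  obtain z where z: "z \<in> interior K" using Ki by auto
  have nz: "n \<bullet> z > n \<bullet> qq" using ni[OF z] .
  have qseg: "qq \<in> open_segment p r" using q by (simp add: p_def qq_def r_def)
  obtain \<rho> where \<rho>: "\<rho> > 0" "\<And>x. dist x qq < \<rho> \<Longrightarrow> n \<bullet> x > n \<bullet> qq \<Longrightarrow> x \<in> interior K"
    using geom_interior[OF Kc z pK(1) pK(2) qseg n np nr nz] by blast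
  have "continuous (at s2 within {a..b}) \<gamma>" using cont_gam s(2) continuous_on_eq_continuous_within by blast
  then obtain \<delta> where \<delta>: "\<delta> > 0" "\<And>t. t \<in> {a..b} \<Longrightarrow> dist t s2 < \<delta> \<Longrightarrow> dist (\<gamma> t) qq < \<rho>"
    using \<rho>(1) unfolding continuous_within_eps_delta qq_def by metis
  have "n \<bullet> \<gamma> t = n \<bullet> qq" if "t \<in> {a..b}" "\<bar>t - s2\<bar> < \<delta>" for t
  proof -
    have "dist (\<gamma> t) qq < \<rho>" using \<delta>(2)[OF that(1)] that(2) by (simp add: dist_real_def)
    hence "\<not> n \<bullet> \<gamma> t > n \<bullet> qq" using \<rho>(2) fr(2)[OF that(1)] by blast
    thus ?thesis using nc[OF fr(1)[OF that(1)]] by simp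
  qed
  thus False using flat[OF s(2) \<delta>(1) n] by blast
qed

lemma noncol:
  assumes "a \<le> t0" "t0 < m" "m < t2" "t2 \<le> b"
  shows "det2 (\<gamma> m - \<gamma> t0) (\<gamma> t2 - \<gamma> m) \<noteq> 0"
proof
  assume d: "det2 (\<gamma> m - \<gamma> t0) (\<gamma> t2 - \<gamma> m) = 0"
  have s: "t0 \<in> {a..b}" "m \<in> {a..b}" "t2 \<in> {a..b}" using assms by auto
  have "\<gamma> t0 \<noteq> \<gamma> m" "\<gamma> m \<noteq> \<gamma> t2" "\<gamma> t0 \<noteq> \<gamma> t2"
    using inj s assms by (auto dest: inj_onD)
  from collinear_between[OF this d]
  consider "\<gamma> m \<in> open_segment (\<gamma> t0) (\<gamma> t2)" | "\<gamma> t0 \<in> open_segment (\<gamma> m) (\<gamma> t2)"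
    | "\<gamma> t2 \<in> open_segment (\<gamma> t0) (\<gamma> m)" by blast
  then show False
  proof cases
    case 1 thus False using mid[OF s(1) s(2) s(3)] by blast
  next
    case 2 thus False using mid[OF s(2) s(1) s(3)] by blast
  next
    case 3 thus False using mid[OF s(1) s(3) s(2)] by blast
  qed
qed

end



lemma cube_root_cube: "x > 0 \<Longrightarrow> (x powr (1/3)) ^ 3 = (x::real)"
proof -
  assume x: "x > 0"
  have "(x powr (1/3)) ^ 3 = (x powr (1/3)) powr (real 3)"
    using x by (simp add: powr_realpow)
  also have "\<dots> = x" using x by (simp add: powr_powr)
  finally show ?thesis .
qed

context ccurve_conv begin

lemma S_strict:
  assumes "a \<le> s" "s < u" "u \<le> b"
  shows "S s < S u"
proof -
  have i1: "(g1 has_integral (\<gamma> u - \<gamma> s)) {s..u}" using assms dgam by (intro ftc) auto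
  have i2: "((\<lambda>t. norm (g1 t)) has_integral (S u - S s)) {s..u}" using assms dS by (intro ftc_real) auto
  have "norm (\<gamma> u - \<gamma> s) \<le> S u - S s" by (rule hi_norm_bound[OF i1 i2]) simp
  moreover have "\<gamma> u \<noteq> \<gamma> s" using inj assms by (auto dest: inj_onD)
  moreover have "norm (\<gamma> u - \<gamma> s) > 0" using calculation(2) by simp
  ultimately show ?thesis by linarith
qed

lemma triple_len:
  assumes t: "a \<le> t0" "t0 < m" "m < t2" "t2 \<le> b"
    and L: "\<gamma> t0 \<in> lattice v0 v1 v2" "\<gamma> m \<in> lattice v0 v1 v2" "\<gamma> t2 \<in> lattice v0 v1 v2"
    and d: "det2 v1 v2 \<noteq> 0"
  shows "2 * (lattice_invariant v1 v2 * R1) powr (1/3) \<le> S t2 - S t0"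
proof -
  define A where "A = lattice_invariant v1 v2"
  have A: "A > 0" using d by (simp add: A_def lattice_invariant_def)
  define \<alpha> where "\<alpha> = S m - S t0"
  define \<beta> where "\<beta> = S t2 - S m"
  have \<alpha>: "\<alpha> \<ge> 0" "\<beta> \<ge> 0" using S_mono t by (auto simp: \<alpha>_def \<beta>_def)
  have "A \<le> \<bar>det2 (\<gamma> m - \<gamma> t0) (\<gamma> t2 - \<gamma> m)\<bar>"
    unfolding A_def using lattice_det[OF L noncol[OF t]] .
  also have "\<dots> \<le> \<alpha> * \<beta> * (\<alpha> + \<beta>) / (2 * R1)"
    using area_bound[of t0 m t2] t by (simp add: \<alpha>_def \<beta>_def)
  also have "\<dots> \<le> (\<alpha> + \<beta>) ^ 3 / (8 * R1)"
  proof -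
    have "4 * (\<alpha> * \<beta>) \<le> (\<alpha> + \<beta>)^2" using zero_le_square[of "\<alpha> - \<beta>"] by (simp add: power2_eq_square algebra_simps)
    hence h: "4 * (\<alpha> * \<beta>) * (\<alpha> + \<beta>) \<le> (\<alpha> + \<beta>)^2 * (\<alpha> + \<beta>)" using \<alpha> by (intro mult_right_mono) auto
    have "\<alpha> * \<beta> * (\<alpha> + \<beta>) / (2 * R1) = (4 * (\<alpha> * \<beta>) * (\<alpha> + \<beta>)) / (8 * R1)" by simp
    also have "\<dots> \<le> ((\<alpha> + \<beta>)^2 * (\<alpha> + \<beta>)) / (8 * R1)" using h R1 by (intro divide_right_mono) auto
    also have "\<dots> = (\<alpha> + \<beta>) ^ 3 / (8 * R1)" by (simp add: power3_eq_cube power2_eq_square)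
    finally show ?thesis .
  qed
  finally have "8 * A * R1 \<le> (\<alpha> + \<beta>) ^ 3" using R1 by (simp add: field_simps)
  moreover have "(2 * (A * R1) powr (1/3)) ^ 3 = 8 * A * R1"
    using cube_root_cube[of "A * R1"] A R1 by (simp add: power_mult_distrib)
  ultimately have "(2 * (A * R1) powr (1/3)) ^ 3 \<le> (\<alpha> + \<beta>) ^ 3" by simp
  hence "(2 * (A * R1) powr (1/3)) ^ Suc 2 \<le> (\<alpha> + \<beta>) ^ Suc 2" by simp
  hence "2 * (A * R1) powr (1/3) \<le> \<alpha> + \<beta>" by (rule power_le_imp_le_base) (use \<alpha> in simp)
  thus ?thesis by (simp add: A_def \<alpha>_def \<beta>_def)
qed

end



lemma Min_less_Max: "finite F \<Longrightarrow> 2 \<le> card F \<Longrightarrow> Min F < Max (F::real set)"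
proof -
  assume f: "finite F" and c: "2 \<le> card F"
  have "\<not> card F \<le> Suc 0" using c by simp
  hence "\<not> (\<forall>x\<in>F. \<forall>y\<in>F. x = y)" using card_le_Suc0_iff_eq[OF f] by simp
  then obtain x y where xy: "x \<in> F" "y \<in> F" "x \<noteq> y" by blast
  have ne: "F \<noteq> {}" using xy by auto
  have "Min F \<le> x" "Min F \<le> y" "x \<le> Max F" "y \<le> Max F" using f xy by auto
  thus ?thesis using xy by linarith
qed

context ccurve_conv begin

lemma S_a: "S a = 0" by (simp add: S_def)

lemma count_claim:
  assumes d: "det2 v1 v2 \<noteq> 0"
  shows "F \<subseteq> {t \<in> {a..b}. \<gamma> t \<in> lattice v0 v1 v2} \<Longrightarrow> finite F \<Longrightarrow> card F = n \<Longrightarrow> 1 \<le> n \<Longrightarrow>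
    (lattice_invariant v1 v2 * R1) powr (1/3) * (real n - 2) < S (Max F) - S (Min F)"
proof (induction n arbitrary: F rule: less_induct)
  case (less n)
  define c where "c = (lattice_invariant v1 v2 * R1) powr (1/3)"
  have c: "c > 0" using d R1 by (simp add: c_def lattice_invariant_def)
  have ne: "F \<noteq> {}" using less.prems by auto
  have Fab: "Min F \<in> {a..b}" "Max F \<in> {a..b}" using less.prems ne Min_in Max_in by blast+
  consider "n = 1" | "n = 2" | "n \<ge> 3" using less.prems(4) by linarith
  thus ?case
  proof cases
    case 1
    then obtain x where "F = {x}" using less.prems(3) card_1_singletonE by blast
    thus ?thesis using c 1 by (simp add: c_def)
  next
    case 2
    have "Min F < Max F" using Min_less_Max less.prems 2 by auto
    hence "S (Min F) < S (Max F)" using Fab by (intro S_strict) auto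
    thus ?thesis using 2 by simp
  next
    case 3
    define u where "u = Max F"
    define F1 where "F1 = F - {u}"
    define mm where "mm = Max F1"
    define F2 where "F2 = F1 - {mm}"
    define t0 where "t0 = Max F2"
    have uF: "u \<in> F" using ne less.prems(2) by (simp add: u_def)
    have cF1: "card F1 = n - 1" using uF less.prems by (simp add: F1_def)
    have fF1: "finite F1" using less.prems by (simp add: F1_def)
    have ne1: "F1 \<noteq> {}" using cF1 3 by auto
    have mF1: "mm \<in> F1" using ne1 fF1 by (simp add: mm_def)
    have cF2: "card F2 = n - 2" using mF1 cF1 fF1 by (simp add: F2_def)
    have fF2: "finite F2" using fF1 by (simp add: F2_def)
    have ne2: "F2 \<noteq> {}" using cF2 3 by auto
    have tF2: "t0 \<in> F2" using ne2 fF2 by (simp add: t0_def)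
    have sub: "F2 \<subseteq> F" "F1 \<subseteq> F" by (auto simp: F1_def F2_def)
    have "t0 \<le> mm" using tF2 fF1 sub by (auto simp: F2_def mm_def)
    moreover have "t0 \<noteq> mm" using tF2 by (auto simp: F2_def)
    ultimately have tm: "t0 < mm" by simp
    have "mm \<le> u" using mF1 less.prems(2) by (auto simp: F1_def u_def)
    moreover have "mm \<noteq> u" using mF1 by (auto simp: F1_def)
    ultimately have mu: "mm < u" by simp
    have inL: "x \<in> {a..b}" "\<gamma> x \<in> lattice v0 v1 v2" if "x \<in> F" for x using that less.prems(1) by auto
    have t0F: "t0 \<in> F" "mm \<in> F" using tF2 mF1 sub by auto
    have tl: "2 * c \<le> S u - S t0"
      unfolding c_def
      using triple_len[OF _ tm mu _ inL(2)[OF t0F(1)] inL(2)[OF t0F(2)] inL(2)[OF uF] d] inL(1)[OF t0F(1)] inL(1)[OF uF]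
      by auto
    have IH: "c * (real (n - 2) - 2) < S (Max F2) - S (Min F2)"
      unfolding c_def using less.IH[of "n - 2" F2] 3 less.prems(1) sub fF2 cF2 by auto
    have minle: "Min F \<le> Min F2" using ne2 fF2 sub less.prems(2) by (simp add: Min_le_iff) (meson Min_in Min_le subsetD)
    have "Min F2 \<in> {a..b}" using ne2 fF2 sub inL(1) Min_in by blast
    hence "S (Min F) \<le> S (Min F2)" using minle Fab by (intro S_mono) auto
    moreover have "Max F2 = t0" by (simp add: t0_def)
    moreover have "c * (real n - 2) = 2 * c + c * (real (n - 2) - 2)" using 3 by (simp add: of_nat_diff algebra_simps)
    ultimately show ?thesis using tl IH by (simp add: c_def u_def)
  qed
qed

lemma count_bound:
  assumes d: "det2 v1 v2 \<noteq> 0"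
  shows "finite (\<gamma> ` {a..b} \<inter> lattice v0 v1 v2) \<and>
    real (card (\<gamma> ` {a..b} \<inter> lattice v0 v1 v2)) < 2 + S b / (lattice_invariant v1 v2 * R1) powr (1/3)"
proof -
  define c where "c = (lattice_invariant v1 v2 * R1) powr (1/3)"
  have c: "c > 0" using d R1 by (simp add: c_def lattice_invariant_def)
  define Ts where "Ts = {t \<in> {a..b}. \<gamma> t \<in> lattice v0 v1 v2}"
  have im: "\<gamma> ` Ts = \<gamma> ` {a..b} \<inter> lattice v0 v1 v2" by (auto simp: Ts_def)
  have "bounded (\<gamma> ` {a..b})" using compact_continuous_image[OF cont_gam compact_Icc] compact_imp_bounded by blast
  hence fin: "finite (\<gamma> ` {a..b} \<inter> lattice v0 v1 v2)" using lattice_finite d by blast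
  have injT: "inj_on \<gamma> Ts" using inj by (rule inj_on_subset) (auto simp: Ts_def)
  have fT: "finite Ts" using fin im injT finite_imageD by metis
  have card: "card (\<gamma> ` {a..b} \<inter> lattice v0 v1 v2) = card Ts" using card_image[OF injT] im by simp
  have Sb: "S b \<ge> 0" using S_mono[of a b] ab S_a by simp
  show ?thesis
  proof (cases "Ts = {}")
    case True
    have "S b / c \<ge> 0" using Sb c by simp
    thus ?thesis using fin card True by (simp add: c_def[symmetric])
  next
    case False
    hence n1: "1 \<le> card Ts" using fT by (simp add: Suc_le_eq card_gt_0_iff)
    have lt: "c * (real (card Ts) - 2) < S (Max Ts) - S (Min Ts)"
      unfolding c_def using count_claim[OF d, where F=Ts and n="card Ts" and ?v0.0=v0] fT n1 by (simp add: Ts_def)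
    have Tab: "Min Ts \<in> {a..b}" "Max Ts \<in> {a..b}" using False fT Min_in Max_in by (auto simp: Ts_def)
    have "S (Max Ts) \<le> S b" "S a \<le> S (Min Ts)" using Tab S_mono by auto
    hence "c * (real (card Ts) - 2) < S b" using lt S_a by linarith
    hence "real (card Ts) - 2 < S b / c" using c by (simp add: field_simps)
    thus ?thesis using fin card by (simp add: c_def)
  qed
qed

end


theorem theorem6p2:
  fixes \<gamma> g1 g2 :: "real \<Rightarrow> real^2" and a b R1 :: real and v0 v1 v2 :: "real^2"
  assumes curve: "open_convex_curve \<gamma> g1 g2 a b"
    and R1: "R1 > 0"
    and rho: "\<forall>t\<in>{a..b}. 1 / curvature g1 g2 t \<ge> R1"
    and indep: "det2 v1 v2 \<noteq> 0"
  shows "finite (\<gamma> ` {a..b} \<inter> lattice v0 v1 v2) \<and>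
         real (card (\<gamma> ` {a..b} \<inter> lattice v0 v1 v2))
           < 4 + curve_length g1 a b / (lattice_invariant v1 v2 * R1) powr (1/3) \<and>
         (total_curvature g1 g2 a b \<le> pi \<longrightarrow>
           real (card (\<gamma> ` {a..b} \<inter> lattice v0 v1 v2))
             < 2 + curve_length g1 a b / (lattice_invariant v1 v2 * R1) powr (1/3))"
proof -
  have C: "C2_pos_curve \<gamma> g1 g2 a b" and inj: "inj_on \<gamma> {a..b}"
    using curve by (auto simp: open_convex_curve_def)
  obtain K where K: "convex K" "interior K \<noteq> {}" "\<gamma> ` {a..b} \<subseteq> frontier K"
    using curve by (auto simp: open_convex_curve_def)
  interpret ccurve_conv \<gamma> g1 g2 a b R1 K
    by unfold_locales (use C R1 rho K inj in auto)
  have len: "curve_length g1 a b = S b" by (simp add: curve_length_def S_def)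
  have "finite (\<gamma> ` {a..b} \<inter> lattice v0 v1 v2) \<and>
    real (card (\<gamma> ` {a..b} \<inter> lattice v0 v1 v2)) < 2 + S b / (lattice_invariant v1 v2 * R1) powr (1/3)"
    by (rule count_bound[OF indep])
  thus ?thesis unfolding len by auto
qed

end
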